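(* Let $G$ be an $n\times n$ positive semidefinite matrix and $\beta\in(0,1]$. Then there is a subspace $W\subseteq\mathbb{R}^n$ with $\dim(W)\ge(1-\beta)n$ such that $w^TGw\le\frac1\beta w^T\mathrm{diag}(G)w$ for all $w\in W$.
   Context: $\mathrm{diag}(G)$ denotes the diagonal matrix with the same diagonal entries as $G$. *)

theory Defs
  imports "HOL-Analysis.Analysis"
begin

definition psd_matrix :: "real^'n^'n \<Rightarrow> bool" where
  "psd_matrix G \<longleftrightarrow> transpose G = G \<and> (\<forall>x. 0 \<le> x \<bullet> (G *v x))"

definition diag_mat :: "real^'n^'n \<Rightarrow> real^'n^'n" where
  "diag_mat G = (\<chi> i j. if i = j then G $ i $ j else 0)"

end

theory Submission
  imports Defs
begin


lemma qf: "x \<bullet> (A *v y) = (\<Sum>i\<in>UNIV. \<Sum>j\<in>UNIV. x$i * A$i$j * y$j)"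
  by (simp add: inner_vec_def matrix_vector_mult_def sum_distrib_left mult.assoc)

lemma ax: "axis i 1 \<bullet> (A *v axis j (1::real)) = A$i$j"
proof -
  have "(A *v axis j (1::real))$i = A$i$j"
    by (simp add: matrix_vector_mult_def axis_def if_distrib[of "\<lambda>x. a * x" for a] cong: if_cong)
  then show ?thesis by (simp add: inner_axis')
qed

lemma psd_diag_nonneg: "psd_matrix G \<Longrightarrow> 0 \<le> G$i$i"
  by (metis ax psd_matrix_def)

lemma psd_sym: "psd_matrix G \<Longrightarrow> G$i$j = G$j$i"
  unfolding psd_matrix_def by (metis transpose_def vec_lambda_beta)

lemma psd_zero_diag: assumes "psd_matrix G" "G$i$i = 0" shows "G$i$j = 0"
proof (cases "i = j")
  case True then show ?thesis using assms by simp
next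
  case False
  have q: "0 \<le> (t *\<^sub>R axis i 1 + axis j 1) \<bullet> (G *v (t *\<^sub>R axis i 1 + axis j (1::real)))" for t
    using assms(1) by (simp add: psd_matrix_def)
  have e: "(t *\<^sub>R axis i 1 + axis j 1) \<bullet> (G *v (t *\<^sub>R axis i 1 + axis j (1::real))) = t*t*G$i$i + t*G$i$j + t*G$j$i + G$j$j" for t
    by (simp add: matrix_vector_right_distrib inner_add_left inner_add_right ax algebra_simps
        scaleR_matrix_vector_assoc[symmetric])
  have s: "G$j$i = G$i$j" using psd_sym[OF assms(1)] by simp
  have "0 \<le> 2*t*G$i$j + G$j$j" for t using q[of t] e[of t] s assms(2) by simp
  from this[of "- (G$j$j + 1) / (2 * G$i$j)"] this[of "(G$j$j + 1) / (2 * G$i$j)"]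
  show ?thesis by (cases "G$i$j = 0") (auto simp: field_simps)
qed



lemma trace_onb:
  fixes E :: "(real^'n) set"
  assumes "finite E" "pairwise orthogonal E" "\<And>b. b \<in> E \<Longrightarrow> norm b = 1" "span E = UNIV"
  shows "(\<Sum>b\<in>E. b \<bullet> (A *v b)) = (\<Sum>i\<in>UNIV. A$i$i)"
proof -
  have d: "(\<Sum>b\<in>E. b$i * b$l) = (if i = l then 1 else 0)" for i l
  proof -
    have "(\<Sum>b\<in>E. (axis l 1 \<bullet> b) *\<^sub>R b) = axis l (1::real)"
      using orthonormal_basis_expand[OF assms(2,3)] assms(1,4) by auto
    then have "(\<Sum>b\<in>E. (axis l 1 \<bullet> b) *\<^sub>R b) $ i = axis l (1::real) $ i" by simp
    moreover have "axis l 1 \<bullet> b = b$l" for b :: "real^'n" by (simp add: inner_axis')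
    ultimately have "(\<Sum>b\<in>E. b$l * b$i) = axis l (1::real) $ i" by (simp add: sum_component)
    moreover have "axis l (1::real) $ i = (if i = l then 1 else 0)" by (simp add: axis_def)
    ultimately show ?thesis by (simp only: mult.commute)
  qed
  have "(\<Sum>b\<in>E. b \<bullet> (A *v b)) = (\<Sum>b\<in>E. \<Sum>i\<in>UNIV. \<Sum>j\<in>UNIV. b$i * A$i$j * b$j)"
    by (simp add: qf)
  also have "\<dots> = (\<Sum>i\<in>UNIV. \<Sum>b\<in>E. \<Sum>j\<in>UNIV. b$i * A$i$j * b$j)"
    by (rule sum.swap)
  also have "\<dots> = (\<Sum>i\<in>UNIV. \<Sum>j\<in>UNIV. \<Sum>b\<in>E. b$i * A$i$j * b$j)"
    by (rule sum.cong[OF refl], rule sum.swap)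
  also have "\<dots> = (\<Sum>i\<in>UNIV. \<Sum>j\<in>UNIV. A$i$j * (\<Sum>b\<in>E. b$i * b$j))"
    by (simp add: sum_distrib_left mult.assoc mult.left_commute)
  also have "\<dots> = (\<Sum>i\<in>UNIV. A$i$i)"
    by (simp add: d if_distrib[of "\<lambda>x. a * x" for a] cong: if_cong)
  finally show ?thesis .
qed



lemma bil_sym: assumes "\<And>i j. A$i$j = A$j$i" shows "x \<bullet> (A *v y) = y \<bullet> ((A::real^'n^'n) *v x)"
proof -
  have "x \<bullet> (A *v y) = (\<Sum>i\<in>UNIV. \<Sum>j\<in>UNIV. x$i * A$i$j * y$j)" by (simp add: qf)
  also have "\<dots> = (\<Sum>j\<in>UNIV. \<Sum>i\<in>UNIV. x$i * A$i$j * y$j)" by (rule sum.swap)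
  also have "\<dots> = (\<Sum>j\<in>UNIV. \<Sum>i\<in>UNIV. y$j * A$j$i * x$i)"
    using assms by (simp add: mult.commute mult.left_commute)
  also have "\<dots> = y \<bullet> (A *v x)" by (simp add: qf)
  finally show ?thesis .
qed

theorem lemma13:
  fixes G :: "real^'n^'n" and \<beta> :: real
  assumes "psd_matrix G" and "0 < \<beta>" and "\<beta> \<le> 1"
  shows "\<exists>W :: (real^'n) set. subspace W \<and> real (dim W) \<ge> (1 - \<beta>) * real CARD('n) \<and>
           (\<forall>w\<in>W. w \<bullet> (G *v w) \<le> (1 / \<beta>) * (w \<bullet> (diag_mat G *v w)))"
proof -
  note psd = assms(1)
  define D where "D = diag_mat G"
  define K where "K = G - (1/\<beta>) *\<^sub>R D"
  have Kbil: "x \<bullet> (K *v y) = x \<bullet> (G *v y) - (1/\<beta>) * (x \<bullet> (D *v y))" for x y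
    by (simp add: qf K_def algebra_simps sum_subtractf sum_distrib_left)
  have Dq: "x \<bullet> (D *v x) = (\<Sum>i\<in>UNIV. G$i$i * (x$i * x$i))" for x
    by (simp add: qf D_def diag_mat_def if_distrib[of "\<lambda>z. a * z" for a] 
        if_distrib[of "\<lambda>z. z * a" for a] mult.commute mult.left_commute cong: if_cong)
  have Gsym: "x \<bullet> (G *v y) = y \<bullet> (G *v x)" for x y
    by (rule bil_sym) (simp add: psd_sym[OF psd])
  have Dsym: "x \<bullet> (D *v y) = y \<bullet> (D *v x)" for x y
    by (rule bil_sym) (simp add: D_def diag_mat_def)
  have Ksym: "x \<bullet> (K *v y) = y \<bullet> (K *v x)" for x y
    using Gsym Dsym Kbil by metis
  have Kexp: "(v + k *\<^sub>R w) \<bullet> (K *v (v + k *\<^sub>R w)) = v \<bullet> (K *v v) + 2 * k * (v \<bullet> (K *v w)) + k * k * (w \<bullet> (K *v w))" for v w k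
  proof -
    have "(v + k *\<^sub>R w) \<bullet> (K *v (v + k *\<^sub>R w)) = v \<bullet> (K *v v) + k * (v \<bullet> (K *v w)) + k * (w \<bullet> (K *v v)) + k * k * (w \<bullet> (K *v w))"
      by (simp add: matrix_vector_right_distrib inner_add_left inner_add_right 
          scaleR_matrix_vector_assoc[symmetric] algebra_simps)
    then show ?thesis using Ksym[of w v] by simp
  qed
  define P where "P V \<longleftrightarrow> subspace V \<and> (\<forall>v\<in>V. v \<noteq> 0 \<longrightarrow> 0 < v \<bullet> (K *v v))" for V :: "(real^'n) set"
  have P0: "P {0}" by (simp add: P_def)
  have "\<exists>d. (\<exists>V. P V \<and> dim V = d) \<and> (\<forall>d'. (\<exists>V. P V \<and> dim V = d') \<longrightarrow> d' \<le> d)"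
    by (rule Nat.ex_has_greatest_nat[of _ 0 "CARD('n)"]) (use P0 dim_subset_UNIV_cart in auto)
  then obtain V where PV: "P V" and Vmax: "\<And>V'. P V' \<Longrightarrow> dim V' \<le> dim V" by blast
  have subV: "subspace V" using PV P_def by auto
  define W where "W = orthogonal_comp ((\<lambda>v. K *v v) ` V)"
  have subW: "subspace W" unfolding W_def by (rule subspace_orthogonal_comp)
  have subKV: "subspace ((\<lambda>v. K *v v) ` V)"
    by (rule linear_subspace_image[OF matrix_vector_mul_linear subV])
  have dimW: "dim W + dim ((\<lambda>v. K *v v) ` V) = CARD('n)"
    using dim_subspace_orthogonal_to_vectors[OF subKV subspace_UNIV subset_UNIV]
    by (simp add: W_def orthogonal_comp_def)
  have dimKV: "dim ((\<lambda>v. K *v v) ` V) \<le> dim V"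
    by (rule dim_image_le[OF matrix_vector_mul_linear])
  have Wneg: "w \<bullet> (K *v w) \<le> 0" if wW: "w \<in> W" for w
  proof (rule ccontr)
    assume pos: "\<not> w \<bullet> (K *v w) \<le> 0"
    have orth: "v \<bullet> (K *v w) = 0" if "v \<in> V" for v
      using wW that Ksym[of v w] unfolding W_def orthogonal_comp_def orthogonal_def by (auto simp: inner_commute)
    have wV: "w \<notin> V" using orth pos by force
    define V' where "V' = span (insert w V)"
    have "P V'"
      unfolding P_def
    proof (intro conjI ballI impI)
      show "subspace V'" by (simp add: V'_def)
    next
      fix x assume "x \<in> V'" "x \<noteq> 0"
      then obtain k where "x - k *\<^sub>R w \<in> span V" unfolding V'_def using span_breakdown_eq by blast
      then have vV: "x - k *\<^sub>R w \<in> V" using subV by (metis span_eq_iff)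
      define v where "v = x - k *\<^sub>R w"
      have x: "x = v + k *\<^sub>R w" by (simp add: v_def)
      have vin: "v \<in> V" using vV by (simp add: v_def)
      have e: "x \<bullet> (K *v x) = v \<bullet> (K *v v) + k * k * (w \<bullet> (K *v w))"
        unfolding x Kexp using orth[OF vin] by simp
      show "0 < x \<bullet> (K *v x)"
      proof (cases "v = 0")
        case True
        then have "k \<noteq> 0" using \<open>x \<noteq> 0\<close> x by auto
        then have "0 < k * k * (w \<bullet> (K *v w))" using pos by (auto simp add: zero_less_mult_iff linorder_neq_iff)
        then show ?thesis using e True by simp
      next
        case False
        then have "0 < v \<bullet> (K *v v)" using PV vin P_def by auto
        moreover have "0 \<le> k * k * (w \<bullet> (K *v w))" using pos by simp
        ultimately show ?thesis using e by linarith
      qed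
    qed
    moreover have "dim V' = dim V + 1"
      using wV subV by (metis V'_def dim_insert dim_span span_eq_iff)
    ultimately show False using Vmax[of V'] by simp
  qed
  have dimV: "real (dim V) \<le> \<beta> * real CARD('n)"
  proof -
    define s where "s i = sqrt (G$i$i)" for i
    define \<phi> where "\<phi> y = (\<chi> i. s i * y$i)" for y :: "real^'n"
    define H :: "real^'n^'n" where "H = (\<chi> i j. G$i$j / (s i * s j))"
    have ss: "s i * s i = G$i$i" for i using psd_diag_nonneg[OF psd] by (simp add: s_def)
    have lin: "linear \<phi>" by (rule linearI) (simp_all add: \<phi>_def vec_eq_iff algebra_simps)
    have F3: "u \<bullet> (H *v u) = (\<chi> i. u$i / s i) \<bullet> (G *v (\<chi> i. u$i / s i))" for u
      by (simp add: qf H_def divide_inverse inverse_mult_distrib mult_ac)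
    have Hpsd: "0 \<le> u \<bullet> (H *v u)" for u using F3 psd unfolding psd_matrix_def by simp
    have F4: "\<phi> y \<bullet> (H *v \<phi> y) = y \<bullet> (G *v y)" for y
    proof -
      have "s i * y$i * (G$i$j / (s i * s j)) * (s j * y$j) = y$i * G$i$j * y$j" for i j
      proof (cases "s i = 0 \<or> s j = 0")
        case True
        then have "G$i$i = 0 \<or> G$j$j = 0" using ss by (metis mult_zero_left)
        then have "G$i$j = 0" using psd_zero_diag[OF psd] psd_sym[OF psd] by metis
        then show ?thesis by simp
      next
        case False then show ?thesis by (simp add: field_simps)
      qed
      note hh = this
      show ?thesis unfolding qf H_def \<phi>_def vec_lambda_beta
        by (intro sum.cong refl hh)
    qed
    have F5: "y \<bullet> (D *v y) = \<phi> y \<bullet> \<phi> y" for y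
      unfolding Dq by (simp add: inner_vec_def \<phi>_def ss[symmetric] mult_ac)
    have F6: "H$i$i \<le> 1" for i
      by (simp add: H_def ss)
    have Kq: "y \<bullet> (K *v y) = y \<bullet> (G *v y) - (1/\<beta>) * (\<phi> y \<bullet> \<phi> y)" for y
      using Kbil F5 by simp
    have spV: "span V = V" using subV by (metis span_eq_iff)
    have inj: "inj_on \<phi> (span V)"
      unfolding spV
    proof (subst linear_inj_on_iff_eq_0[OF lin subV], intro ballI impI)
      fix x assume xV: "x \<in> V" and "\<phi> x = 0"
      then have "x \<bullet> (K *v x) = 0" using Kq[of x] F4[of x] by simp
      then show "x = 0" using PV xV unfolding P_def by force
    qed
    define U where "U = \<phi> ` V"
    have dimU: "dim U = dim V" unfolding U_def by (rule dim_image_eq[OF lin inj])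
    have subU: "subspace U" unfolding U_def by (rule linear_subspace_image[OF lin subV])
    obtain B where B: "B \<subseteq> U" "pairwise orthogonal B" "\<And>x. x\<in>B \<Longrightarrow> norm x = 1"
        "independent B" "card B = dim U" "span B = U"
      using orthonormal_basis_subspace[OF subU] by blast
    obtain C where C: "C \<subseteq> orthogonal_comp U" "pairwise orthogonal C" "\<And>x. x\<in>C \<Longrightarrow> norm x = 1"
        "independent C" "card C = dim (orthogonal_comp U)" "span C = orthogonal_comp U"
      using orthonormal_basis_subspace[OF subspace_orthogonal_comp] by blast
    have finB: "finite B" "finite C" using B C pairwise_orthogonal_imp_finite by auto
    have BC: "b \<bullet> c = 0" if "b\<in>B" "c\<in>C" for b c
      using that B(1) C(1) unfolding orthogonal_comp_def orthogonal_def by auto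
    have disj: "B \<inter> C = {}"
    proof (rule ccontr)
      assume "B \<inter> C \<noteq> {}"
      then obtain b where "b \<in> B" "b \<in> C" by auto
      then have "b \<bullet> b = 0" using BC by auto
      then show False using B(3)[OF \<open>b \<in> B\<close>] by simp
    qed
    have orthE: "pairwise orthogonal (B \<union> C)"
      using B(2) C(2) BC unfolding pairwise_def orthogonal_def by (metis UnE inner_commute)
    have spanE: "span (B \<union> C) = UNIV"
    proof -
      have "x \<in> span (B \<union> C)" for x
      proof -
        have "x \<in> U + orthogonal_comp U" using subspace_sum_orthogonal_comp[OF subU] by simp
        then obtain a c where "a \<in> U" "c \<in> orthogonal_comp U" "x = a + c" by (meson set_plus_elim)
        moreover have "a \<in> span (B \<union> C)" using \<open>a \<in> U\<close> B(6) span_mono[of B "B \<union> C"] by auto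
        moreover have "c \<in> span (B \<union> C)" using \<open>c \<in> orthogonal_comp U\<close> C(6) span_mono[of C "B \<union> C"] by auto
        ultimately show ?thesis by (simp add: span_add)
      qed
      then show ?thesis by auto
    qed
    have tr: "(\<Sum>b\<in>B \<union> C. b \<bullet> (H *v b)) = (\<Sum>i\<in>UNIV. H$i$i)"
      by (rule trace_onb) (use finB orthE spanE B(3) C(3) in auto)
    have trn: "(\<Sum>i\<in>UNIV. H$i$i) \<le> real CARD('n)"
      using F6 sum_mono[of UNIV "\<lambda>i. H$i$i" "\<lambda>_. 1"] by simp
    have SC: "0 \<le> (\<Sum>b\<in>C. b \<bullet> (H *v b))" by (rule sum_nonneg) (use Hpsd in auto)
    have SB: "real (card B) * (1/\<beta>) \<le> (\<Sum>b\<in>B. b \<bullet> (H *v b))"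
    proof -
      have "1/\<beta> \<le> b \<bullet> (H *v b)" if bB: "b \<in> B" for b
      proof -
        obtain y where yV: "y \<in> V" and bphi: "b = \<phi> y" using bB B(1) U_def by auto
        have n1: "b \<bullet> b = 1" using B(3)[OF bB] by (simp add: norm_eq_1)
        have "y \<noteq> 0" using n1 linear_0[OF lin] bphi by auto
        then have "0 < y \<bullet> (K *v y)" using PV yV P_def by auto
        then show ?thesis using Kq[of y] F4[of y] n1 by (simp add: bphi)
      qed
      then have "(\<Sum>b\<in>B. 1/\<beta>) \<le> (\<Sum>b\<in>B. b \<bullet> (H *v b))" by (rule sum_mono)
      then show ?thesis by simp
    qed
    have "(\<Sum>b\<in>B \<union> C. b \<bullet> (H *v b)) = (\<Sum>b\<in>B. b \<bullet> (H *v b)) + (\<Sum>b\<in>C. b \<bullet> (H *v b))"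
      by (rule sum.union_disjoint) (use finB disj in auto)
    then have "real (card B) * (1/\<beta>) \<le> real CARD('n)" using tr trn SC SB by linarith
    then have "real (card B) \<le> \<beta> * real CARD('n)" using assms(2) by (simp add: field_simps)
    then show ?thesis using B(5) dimU by simp
  qed
  show ?thesis
  proof (intro exI conjI ballI)
    show "subspace W" by (rule subW)
    show "(1 - \<beta>) * real CARD('n) \<le> real (dim W)"
      using dimW dimKV dimV by (simp add: algebra_simps)
  next
    fix w assume "w \<in> W"
    from Wneg[OF this] Kbil[of w w]
    show "w \<bullet> (G *v w) \<le> (1 / \<beta>) * (w \<bullet> (diag_mat G *v w))" by (simp add: D_def)
  qed
qed

end
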